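(* Let $G$ be a finite undirected graph and $\tau\ge1$ an integer. Run the following procedure. Maintain a current graph $H$, initially $H=G$, and a stored value $s(e)$ for each edge, initially $s(e)=\mathrm{sup}_\tau(e,G)$ for every $e\in E(G)$. While $H$ has at least one edge: set $k:=\min_{e\in E(H)} s(e)+2$; then, while there exists an edge $e=(u,v)\in E(H)$ with $s(e)\le k-2$, pick any such edge, assign $\phi(e):=k$, let $H_{\mathrm{old}}:=H$, delete the edge $e$ from $H$, and for every edge $e'=(u',v')\in E(H)$ with $u',v'\in\{u\}\cup\{v\}\cup\Delta_\tau(e,H_{\mathrm{old}})$ and $s(e')>k-2$, reset $s(e'):=\mathrm{sup}_\tau(e',H)$. Then, when the procedure terminates, every edge $e\in E(G)$ has been assigned exactly once and $\phi(e)=\phi_\tau(e,G)$, regardless of the choices made.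
   Context: Graphs are finite, simple, undirected and unweighted; paths may repeat vertices and their length is the number of edges. For vertices $v,u$ of a graph $H$, $u$ is $\tau$-hop reachable from $v$ in $H$ if there is a path between them in $H$ of length at most $\tau$. $N_\tau(v,H)$ is the set of vertices $u\ne v$ that are $\tau$-hop reachable from $v$ in $H$. For an edge $e=(u,v)$ of $H$, $\Delta_\tau(e,H)=N_\tau(u,H)\cap N_\tau(v,H)$ and $\mathrm{sup}_\tau(e,H)=|\Delta_\tau(e,H)|$. The $(k,\tau)$-truss of $G$ is the maximal subgraph $G'$ of $G$ such that $\mathrm{sup}_\tau(e,G')\ge k-2$ for every edge $e\in E(G')$ (supports computed inside $G'$) and no more edges of $G$ can be added while keeping this property; a subgraph is determined by its edge set. The higher-order truss number $\phi_\tau(e,G)$ of an edge $e$ is the maximum $k$ such that $e$ belongs to the $(k,\tau)$-truss of $G$. *)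

theory Defs
  imports Main
begin

text \<open>A graph is given by its edge set: a set of 2-element vertex sets.
  A walk in H is a nonempty vertex list whose consecutive entries are adjacent in H;
  its length is (number of vertices - 1).\<close>

definition walk :: "'a set set \<Rightarrow> 'a list \<Rightarrow> bool" where
  "walk H xs \<longleftrightarrow> xs \<noteq> [] \<and> (\<forall>i. Suc i < length xs \<longrightarrow> {xs ! i, xs ! Suc i} \<in> H)"

definition hop_reach :: "nat \<Rightarrow> 'a set set \<Rightarrow> 'a \<Rightarrow> 'a \<Rightarrow> bool" where
  "hop_reach \<tau> H v u \<longleftrightarrow>
     (\<exists>xs. walk H xs \<and> hd xs = v \<and> last xs = u \<and> length xs - 1 \<le> \<tau>)"

definition Nbh :: "nat \<Rightarrow> 'a \<Rightarrow> 'a set set \<Rightarrow> 'a set" where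
  "Nbh \<tau> v H = {u. u \<noteq> v \<and> hop_reach \<tau> H v u}"

definition Delta :: "nat \<Rightarrow> 'a set \<Rightarrow> 'a set set \<Rightarrow> 'a set" where
  "Delta \<tau> e H = (\<Inter>x\<in>e. Nbh \<tau> x H)"

definition supp :: "nat \<Rightarrow> 'a set \<Rightarrow> 'a set set \<Rightarrow> nat" where
  "supp \<tau> e H = card (Delta \<tau> e H)"

definition truss_ok :: "nat \<Rightarrow> nat \<Rightarrow> 'a set set \<Rightarrow> bool" where
  "truss_ok \<tau> k F \<longleftrightarrow> (\<forall>e\<in>F. int (supp \<tau> e F) \<ge> int k - 2)"

definition is_truss :: "nat \<Rightarrow> nat \<Rightarrow> 'a set set \<Rightarrow> 'a set set \<Rightarrow> bool" where
  "is_truss \<tau> k G F \<longleftrightarrow> F \<subseteq> G \<and> truss_ok \<tau> k F \<and>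
     (\<forall>F'. F \<subseteq> F' \<and> F' \<subseteq> G \<and> truss_ok \<tau> k F' \<longrightarrow> F' = F)"

definition truss :: "nat \<Rightarrow> nat \<Rightarrow> 'a set set \<Rightarrow> 'a set set" where
  "truss \<tau> k G = (THE F. is_truss \<tau> k G F)"

definition truss_number :: "nat \<Rightarrow> 'a set \<Rightarrow> 'a set set \<Rightarrow> nat" where
  "truss_number \<tau> e G = (GREATEST k. e \<in> truss \<tau> k G)"

text \<open>Procedure states: (H, s, log, k, inner). log records the assignments phi(e) := k
  in order; inner says whether we are inside the inner while loop.\<close>
type_synonym 'a pstate = "'a set set \<times> ('a set \<Rightarrow> nat) \<times> ('a set \<times> nat) list \<times> nat \<times> bool"

definition init_state :: "nat \<Rightarrow> 'a set set \<Rightarrow> 'a pstate" where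
  "init_state \<tau> G = (G, \<lambda>e. supp \<tau> e G, [], 0, False)"

inductive proc_step :: "nat \<Rightarrow> 'a pstate \<Rightarrow> 'a pstate \<Rightarrow> bool" for \<tau> where
  outer: "H \<noteq> {} \<Longrightarrow>
     proc_step \<tau> (H, s, log, k0, False) (H, s, log, Min (s ` H) + 2, True)"
| pick: "e \<in> H \<Longrightarrow> s e \<le> k - 2 \<Longrightarrow>
     proc_step \<tau> (H, s, log, k, True)
       (H - {e},
        (\<lambda>e'. if e' \<in> H - {e} \<and> e' \<subseteq> e \<union> Delta \<tau> e H \<and> s e' > k - 2
              then supp \<tau> e' (H - {e}) else s e'),
        log @ [(e, k)], k, True)"
| inner_done: "(\<forall>e\<in>H. s e > k - 2) \<Longrightarrow>
     proc_step \<tau> (H, s, log, k, True) (H, s, log, k, False)"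

definition final_state :: "'a pstate \<Rightarrow> bool" where
  "final_state st \<longleftrightarrow> (case st of (H, s, log, k, inner) \<Rightarrow> H = {} \<and> \<not> inner)"

end

theory Submission
  imports Defs
begin


lemma walk_mono: "H \<subseteq> H' \<Longrightarrow> walk H xs \<Longrightarrow> walk H' xs"
  unfolding walk_def by blast

lemma hop_reach_mono: "H \<subseteq> H' \<Longrightarrow> hop_reach n H x y \<Longrightarrow> hop_reach n H' x y"
  unfolding hop_reach_def using walk_mono by blast

lemma hop_reach_refl: "hop_reach n H x x"
  unfolding hop_reach_def walk_def by (rule exI[of _ "[x]"]) auto

lemma hop_reach_le: "hop_reach n H x y \<Longrightarrow> n \<le> m \<Longrightarrow> hop_reach m H x y"
  unfolding hop_reach_def by fastforce

lemma walk_rev: "walk H xs \<Longrightarrow> walk H (rev xs)"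
  unfolding walk_def
proof (intro conjI allI impI)
  fix i assume w: "xs \<noteq> [] \<and> (\<forall>i. Suc i < length xs \<longrightarrow> {xs ! i, xs ! Suc i} \<in> H)"
    and i: "Suc i < length (rev xs)"
  define j where "j = length xs - Suc (Suc i)"
  have j: "Suc j < length xs" "length xs - Suc i = Suc j" "length xs - Suc (Suc i) = j"
    using i unfolding j_def by auto
  have "{xs ! j, xs ! Suc j} \<in> H" using w j by blast
  then show "{rev xs ! i, rev xs ! Suc i} \<in> H"
    using i j by (simp add: rev_nth insert_commute)
qed (auto)

lemma hop_reach_sym: "hop_reach n H x y \<Longrightarrow> hop_reach n H y x"
  unfolding hop_reach_def
  apply clarify
  subgoal for xs
    apply (rule exI[of _ "rev xs"])
    using walk_rev[of H xs] by (auto simp: walk_def hd_rev last_rev)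
  done

lemma hop_reach_snoc: "hop_reach n H x y \<Longrightarrow> {y,z} \<in> H \<Longrightarrow> hop_reach (Suc n) H x z"
  unfolding hop_reach_def
proof clarify
  fix xs assume w: "walk H xs" and h: "x = hd xs" "y = last xs" "length xs - 1 \<le> n" and e: "{last xs, z} \<in> H"
  have ne: "xs \<noteq> []" using w walk_def by auto
  have "walk H (xs @ [z])"
    unfolding walk_def
  proof (intro conjI allI impI)
    fix i assume i: "Suc i < length (xs @ [z])"
    show "{(xs @ [z]) ! i, (xs @ [z]) ! Suc i} \<in> H"
    proof (cases "Suc i < length xs")
      case True then show ?thesis using w by (simp add: nth_append walk_def)
    next
      case False
      then have "i = length xs - 1" using i by auto
      then show ?thesis using e ne by (simp add: nth_append last_conv_nth)
    qed
  qed simp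
  then show "\<exists>ys. walk H ys \<and> hd ys = hd xs \<and> last ys = z \<and> length ys - 1 \<le> Suc n"
    using ne h by (intro exI[of _ "xs @ [z]"]) auto
qed

lemma walk_take: "walk H xs \<Longrightarrow> j < length xs \<Longrightarrow> hop_reach j H (hd xs) (xs ! j)"
  unfolding hop_reach_def
  apply (rule exI[of _ "take (Suc j) xs"])
  apply (auto simp: walk_def last_conv_nth min_def)
  apply (subgoal_tac "length xs - Suc 0 = j")
   apply simp
  apply linarith
  done

lemma walk_drop: "walk H xs \<Longrightarrow> j < length xs \<Longrightarrow> hop_reach (length xs - 1 - j) H (xs ! j) (last xs)"
  unfolding hop_reach_def
  apply (rule exI[of _ "drop j xs"])
  apply (auto simp: walk_def hd_drop_conv_nth)
  done



lemma Nbh_mono: assumes "H \<subseteq> H'" shows "Nbh n x H \<subseteq> Nbh n x H'"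
  unfolding Nbh_def using hop_reach_mono[OF assms] by auto

lemma Delta_mono: assumes "H \<subseteq> H'" shows "Delta n e H \<subseteq> Delta n e H'"
  unfolding Delta_def using subsetD[OF Nbh_mono[OF assms]] by auto

lemma Nbh_sub: "Nbh n x H \<subseteq> \<Union>H"
proof
  fix u assume "u \<in> Nbh n x H"
  then obtain xs where w: "walk H xs" "hd xs = x" "last xs = u" "u \<noteq> x"
    unfolding Nbh_def hop_reach_def by blast
  have ne: "xs \<noteq> []" using w(1) unfolding walk_def by simp
  have l2: "2 \<le> length xs"
  proof (rule ccontr)
    assume "\<not> 2 \<le> length xs"
    moreover have "length xs \<noteq> 0" using ne by simp
    ultimately have "length xs = 1" by linarith
    then have "last xs = hd xs" using ne by (cases xs) auto
    then show False using w by simp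
  qed
  define m where "m = length xs - 2"
  have l: "Suc m < length xs" "Suc m = length xs - 1" using l2 unfolding m_def by arith+
  have "{xs ! m, xs ! Suc m} \<in> H" using w(1) l(1) unfolding walk_def by blast
  moreover have "u = xs ! Suc m" using l(2) w(3) ne by (simp add: last_conv_nth)
  ultimately show "u \<in> \<Union>H" by blast
qed

definition gwf :: "'a set set \<Rightarrow> bool" where
  "gwf G \<longleftrightarrow> finite G \<and> (\<forall>e\<in>G. card e = 2)"

lemma finite_Delta: "gwf G \<Longrightarrow> H \<subseteq> G \<Longrightarrow> x \<in> e \<Longrightarrow> finite (Delta n e H)"
proof -
  assume g: "gwf G" "H \<subseteq> G" "x \<in> e"
  have fH: "finite H" using g unfolding gwf_def using finite_subset by auto
  have "\<forall>f\<in>H. finite f"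
  proof
    fix f assume "f \<in> H"
    then have "card f = 2" using g unfolding gwf_def by auto
    then show "finite f" using card.infinite by fastforce
  qed
  then have "finite (\<Union>H)" using fH by (simp add: finite_Union)
  moreover have "Delta n e H \<subseteq> Nbh n x H" using g(3) unfolding Delta_def by (rule INT_lower)
  then have "Delta n e H \<subseteq> \<Union>H" using Nbh_sub by (rule subset_trans)
  ultimately show ?thesis using finite_subset by auto
qed

lemma supp_mono: "gwf G \<Longrightarrow> H \<subseteq> H' \<Longrightarrow> H' \<subseteq> G \<Longrightarrow> e \<noteq> {} \<Longrightarrow> supp n e H \<le> supp n e H'"
proof -
  assume a: "gwf G" "H \<subseteq> H'" "H' \<subseteq> G" "e \<noteq> {}"
  then obtain x where "x \<in> e" by auto
  then have "finite (Delta n e H')" using finite_Delta[OF a(1) a(3)] by blast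
  then show ?thesis unfolding supp_def using Delta_mono[OF a(2)] by (rule card_mono)
qed

lemma locality:
  assumes g: "gwf G" and HG: "H \<subseteq> G" and eH: "e \<in> H" and e'H: "e' \<in> H"
    and nsub: "\<not> e' \<subseteq> e \<union> Delta n e H"
  shows "Delta n e' (H - {e}) = Delta n e' H"
proof (rule ccontr)
  assume "Delta n e' (H - {e}) \<noteq> Delta n e' H"
  then obtain w where wD: "w \<in> Delta n e' H" and wn: "w \<notin> Delta n e' (H - {e})"
    using Delta_mono[of "H - {e}" H n e'] by blast
  then obtain y0 where y0: "y0 \<in> e'" "w \<notin> Nbh n y0 (H - {e})"
    unfolding Delta_def by blast
  have "w \<in> Nbh n y0 H" using wD y0 unfolding Delta_def by blast
  then obtain xs where xs: "walk H xs" "hd xs = y0" "last xs = w" "length xs - 1 \<le> n" "w \<noteq> y0"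
    unfolding Nbh_def hop_reach_def by blast
  have "\<not> walk (H - {e}) xs" using y0 xs unfolding Nbh_def hop_reach_def by blast
  then obtain i where i: "Suc i < length xs" "{xs ! i, xs ! Suc i} = e"
    using xs(1) unfolding walk_def by blast
  define a where "a = xs ! i"
  define b where "b = xs ! Suc i"
  have e_ab: "e = {a, b}" using i a_def b_def by simp
  have ra: "hop_reach i H y0 a" using walk_take[OF xs(1), of i] i xs a_def by simp
  have rb: "hop_reach (Suc i) H y0 b" using walk_take[OF xs(1), of "Suc i"] i xs b_def by simp
  have si: "Suc i \<le> n" using i xs by linarith
  obtain x where e'_eq: "e' = {y0, x}" and xy: "x \<noteq> y0"
  proof -
    have "card e' = 2" using g HG e'H unfolding gwf_def by blast
    then obtain p q where "e' = {p, q}" "p \<noteq> q" by (meson card_2_iff)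
    then show ?thesis using that y0(1) by auto
  qed
  have y0_in: "y0 \<in> e \<union> Delta n e H"
  proof (cases "y0 \<in> e")
    case False
    then have "y0 \<noteq> a" "y0 \<noteq> b" using e_ab by auto
    moreover have "hop_reach n H a y0" using hop_reach_le[OF hop_reach_sym[OF ra]] si by simp
    moreover have "hop_reach n H b y0" using hop_reach_le[OF hop_reach_sym[OF rb]] si by simp
    ultimately show ?thesis unfolding Delta_def Nbh_def e_ab by auto
  qed simp
  have x_in: "x \<in> e \<union> Delta n e H"
  proof (cases "x \<in> e")
    case False
    then have xab: "x \<noteq> a" "x \<noteq> b" using e_ab by auto
    have edge: "{y0, x} \<in> H" using e'H e'_eq by simp
    have "hop_reach (Suc i) H a x" using hop_reach_snoc[OF hop_reach_sym[OF ra] edge] .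
    then have ha: "hop_reach n H a x" using hop_reach_le si by metis
    have hb: "hop_reach n H b x"
    proof (cases "Suc (Suc i) \<le> n")
      case True
      have "hop_reach (Suc (Suc i)) H b x" using hop_reach_snoc[OF hop_reach_sym[OF rb] edge] .
      then show ?thesis using hop_reach_le True by metis
    next
      case False
      then have "length xs = Suc (Suc i)" using i xs by linarith
      then have "w = b" using xs(3) b_def i last_conv_nth[of xs] by (metis diff_Suc_1 list.size(3) nat.distinct(1))
      moreover have "w \<in> Nbh n x H" using wD e'_eq unfolding Delta_def by blast
      ultimately have "hop_reach n H x b" unfolding Nbh_def by simp
      then show ?thesis by (rule hop_reach_sym)
    qed
    have "x \<in> Nbh n a H" "x \<in> Nbh n b H" using ha hb xab unfolding Nbh_def by auto
    then show ?thesis unfolding Delta_def e_ab by auto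
  qed simp
  show False using nsub y0_in x_in e'_eq by blast
qed



definition TU :: "nat \<Rightarrow> nat \<Rightarrow> 'a set set \<Rightarrow> 'a set set" where
  "TU n k G = \<Union>{F. F \<subseteq> G \<and> truss_ok n k F}"

lemma gwf_ne: "gwf G \<Longrightarrow> e \<in> G \<Longrightarrow> e \<noteq> {}"
  unfolding gwf_def by fastforce

lemma TU_ok: assumes g: "gwf G" shows "truss_ok n k (TU n k G)"
  unfolding truss_ok_def
proof
  fix e assume "e \<in> TU n k G"
  then obtain F where F: "F \<subseteq> G" "truss_ok n k F" "e \<in> F" unfolding TU_def by blast
  have sub: "F \<subseteq> TU n k G" "TU n k G \<subseteq> G" using F unfolding TU_def by blast+
  have "supp n e F \<le> supp n e (TU n k G)"
    using supp_mono[OF g sub gwf_ne[OF g subsetD[OF F(1) F(3)]]] .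
  then show "int k - 2 \<le> int (supp n e (TU n k G))" using F unfolding truss_ok_def by force
qed

lemma truss_eq: assumes g: "gwf G" shows "truss n k G = TU n k G"
proof -
  have it: "is_truss n k G (TU n k G)"
    unfolding is_truss_def using TU_ok[OF g] unfolding TU_def by blast
  have "\<And>F. is_truss n k G F \<Longrightarrow> F = TU n k G"
  proof -
    fix F assume f: "is_truss n k G F"
    then have "F \<subseteq> TU n k G" unfolding is_truss_def TU_def by blast
    then show "F = TU n k G" using f it unfolding is_truss_def by blast
  qed
  then show ?thesis unfolding truss_def using it by (rule the_equality[rotated])
qed

lemma truss_sub: "gwf G \<Longrightarrow> truss n k G \<subseteq> G"
  using truss_eq unfolding TU_def by blast

lemma truss_ok_truss: "gwf G \<Longrightarrow> truss_ok n k (truss n k G)"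
  using truss_eq TU_ok by metis

lemma truss_max: "gwf G \<Longrightarrow> F \<subseteq> G \<Longrightarrow> truss_ok n k F \<Longrightarrow> F \<subseteq> truss n k G"
  using truss_eq unfolding TU_def by blast

lemma truss_anti: "gwf G \<Longrightarrow> i \<le> j \<Longrightarrow> truss n j G \<subseteq> truss n i G"
proof -
  assume g: "gwf G" and ij: "i \<le> j"
  have "truss_ok n i (truss n j G)" using truss_ok_truss[OF g, of n j] ij
    unfolding truss_ok_def by force
  then show ?thesis using truss_max[OF g truss_sub[OF g]] by blast
qed

definition inv :: "nat \<Rightarrow> 'a set set \<Rightarrow> 'a pstate \<Rightarrow> bool" where
  "inv n G st \<longleftrightarrow> (case st of (H, s, log, k, inner) \<Rightarrow>
     H \<subseteq> G \<and>
     (\<forall>e\<in>H. supp n e H \<le> s e) \<and>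
     (\<forall>e\<in>H. (\<not> inner \<or> k - 2 < s e) \<longrightarrow> s e = supp n e H) \<and>
     (\<not> inner \<longrightarrow> (\<forall>e\<in>H. k \<le> s e + 1)) \<and>
     (inner \<longrightarrow> 2 \<le> k \<and> H \<subseteq> truss n k G) \<and>
     truss n (Suc k) G \<subseteq> H \<and>
     distinct (map fst log) \<and> set (map fst log) \<inter> H = {} \<and> set (map fst log) \<union> H = G \<and>
     (\<forall>(e, j)\<in>set log. j = truss_number n e G))"

lemma inv_init: "gwf G \<Longrightarrow> inv n G (init_state n G)"
  unfolding inv_def init_state_def using truss_sub by auto

lemma not_in_truss:
  assumes g: "gwf G" and HG: "H \<subseteq> G" and T: "truss n (Suc k) G \<subseteq> H"
    and eH: "e \<in> H" and se: "supp n e H \<le> s e" and sk: "s e \<le> k - 2" and k2: "2 \<le> k"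
    and j: "k < j"
  shows "e \<notin> truss n j G"
proof
  assume "e \<in> truss n j G"
  then have et: "e \<in> truss n (Suc k) G" using truss_anti[OF g, of "Suc k" j n] j by auto
  then have "int (Suc k) - 2 \<le> int (supp n e (truss n (Suc k) G))"
    using truss_ok_truss[OF g, of n "Suc k"] unfolding truss_ok_def by blast
  moreover have "supp n e (truss n (Suc k) G) \<le> supp n e H"
    using supp_mono[OF g T HG gwf_ne[OF g subsetD[OF HG eH]]] .
  ultimately show False using se sk k2 by linarith
qed

lemma inv_step:
  assumes g: "gwf G" and st: "proc_step n st st'" and iv: "inv n G st"
  shows "inv n G st'"
  using st iv
proof (cases rule: proc_step.cases)
  case (outer H s log k0)
  have fin: "finite H" using iv outer g unfolding inv_def gwf_def by (auto intro: finite_subset)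
  define m where "m = Min (s ` H)"
  have mle: "\<And>e. e \<in> H \<Longrightarrow> m \<le> s e" unfolding m_def using fin by simp
  have "m \<in> s ` H" unfolding m_def using fin outer(3) by (intro Min_in) auto
  then obtain e0 where e0: "e0 \<in> H" "m = s e0" by auto
  have HG: "H \<subseteq> G" and eq: "\<forall>e\<in>H. s e = supp n e H" and k0le: "\<forall>e\<in>H. k0 \<le> s e + 1"
    and T: "truss n (Suc k0) G \<subseteq> H"
    using iv outer unfolding inv_def by auto
  have "truss_ok n (m + 2) H" unfolding truss_ok_def using mle eq by force
  then have Ht: "H \<subseteq> truss n (m + 2) G" using truss_max[OF g HG] by blast
  have "k0 \<le> m + 1" using k0le e0 by auto
  then have "truss n (Suc (m + 2)) G \<subseteq> H" using truss_anti[OF g, of "Suc k0" "Suc (m+2)" n] T by auto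
  moreover have "\<forall>e\<in>H. supp n e H \<le> s e" using eq by simp
  moreover have "distinct (map fst log) \<and> set (map fst log) \<inter> H = {} \<and> set (map fst log) \<union> H = G \<and>
     (\<forall>(e, j)\<in>set log. j = truss_number n e G)" using iv outer unfolding inv_def by simp
  ultimately show ?thesis unfolding outer(2) inv_def m_def[symmetric] using HG eq Ht
    by (simp del: Min_le_iff)
next
  case (inner_done H s k log)
  have HG: "H \<subseteq> G" and B: "\<forall>e\<in>H. supp n e H \<le> s e"
    and C: "\<forall>e\<in>H. k - 2 < s e \<longrightarrow> s e = supp n e H"
    and k2: "2 \<le> k" and T: "truss n (Suc k) G \<subseteq> H"
    and L: "distinct (map fst log) \<and> set (map fst log) \<inter> H = {} \<and> set (map fst log) \<union> H = G \<and>
      (\<forall>(e, j)\<in>set log. j = truss_number n e G)"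
    using iv inner_done unfolding inv_def by auto
  have C': "\<forall>e\<in>H. s e = supp n e H" using C inner_done(3) by blast
  have D: "\<forall>e\<in>H. k \<le> s e + 1" using inner_done(3) k2 by force
  show ?thesis unfolding inner_done(2) inv_def using HG B C' D T L by simp
next
  case (pick e H s k log)
  let ?s' = "\<lambda>e'. if e' \<in> H - {e} \<and> e' \<subseteq> e \<union> Delta n e H \<and> s e' > k - 2
              then supp n e' (H - {e}) else s e'"
  have HG: "H \<subseteq> G" and B: "\<forall>e\<in>H. supp n e H \<le> s e"
    and C: "\<forall>e\<in>H. k - 2 < s e \<longrightarrow> s e = supp n e H"
    and k2: "2 \<le> k" and Ht: "H \<subseteq> truss n k G" and T: "truss n (Suc k) G \<subseteq> H"
    and L: "distinct (map fst log)" "set (map fst log) \<inter> H = {}" "set (map fst log) \<union> H = G"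
      "\<forall>(e, j)\<in>set log. j = truss_number n e G"
    using iv pick unfolding inv_def by auto
  have HG': "H - {e} \<subseteq> G" using HG by blast
  have B': "\<forall>e'\<in>H - {e}. supp n e' (H - {e}) \<le> ?s' e'"
  proof
    fix e' assume e': "e' \<in> H - {e}"
    have "supp n e' (H - {e}) \<le> supp n e' H" using supp_mono[OF g _ HG gwf_ne[OF g], of "H - {e}" e' n] e' HG by blast
    then show "supp n e' (H - {e}) \<le> ?s' e'" using B e' by auto
  qed
  have C': "\<forall>e'\<in>H - {e}. k - 2 < ?s' e' \<longrightarrow> ?s' e' = supp n e' (H - {e})"
  proof (intro ballI impI)
    fix e' assume e': "e' \<in> H - {e}" and lt: "k - 2 < ?s' e'"
    show "?s' e' = supp n e' (H - {e})"
    proof (cases "e' \<subseteq> e \<union> Delta n e H \<and> s e' > k - 2")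
      case True then show ?thesis using e' by simp
    next
      case False
      then have ns: "\<not> e' \<subseteq> e \<union> Delta n e H" using lt e' by auto
      have "Delta n e' (H - {e}) = Delta n e' H" using locality[OF g HG pick(3) _ ns] e' by blast
      then show ?thesis using C e' lt False unfolding supp_def by auto
    qed
  qed
  have notin: "\<And>j. k < j \<Longrightarrow> e \<notin> truss n j G"
    using not_in_truss[where s=s, OF g HG T pick(3) B[rule_format, OF pick(3)] pick(4) k2] by blast
  have T': "truss n (Suc k) G \<subseteq> H - {e}" using T notin[of "Suc k"] by blast
  have tn: "truss_number n e G = k"
    unfolding truss_number_def
  proof (rule Greatest_equality)
    show "e \<in> truss n k G" using Ht pick(3) by blast
    show "\<And>y. e \<in> truss n y G \<Longrightarrow> y \<le> k" using notin by (meson not_le)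
  qed
  have L': "distinct (map fst (log @ [(e, k)]))" "set (map fst (log @ [(e, k)])) \<inter> (H - {e}) = {}"
    "set (map fst (log @ [(e, k)])) \<union> (H - {e}) = G"
    "\<forall>(e', j)\<in>set (log @ [(e, k)]). j = truss_number n e' G"
    using L pick(3) tn by auto
  show ?thesis unfolding inv_def pick(2) using HG' B' C' k2 Ht T' L' by auto
qed

lemma inv_reach: "gwf G \<Longrightarrow> (proc_step n)\<^sup>*\<^sup>* (init_state n G) st \<Longrightarrow> inv n G st"
proof -
  assume g: "gwf G" and r: "(proc_step n)\<^sup>*\<^sup>* (init_state n G) st"
  from r show ?thesis
    by (induction rule: rtranclp_induct) (auto intro: inv_init[OF g] inv_step[OF g])
qed


theorem theorem1:
  fixes G :: "'a set set" and \<tau> :: nat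
  assumes "finite G" and "\<forall>e\<in>G. card e = 2" and "\<tau> \<ge> 1"
    and "(proc_step \<tau>)\<^sup>*\<^sup>* (init_state \<tau> G) (H, s, log, k, inner)"
    and "final_state (H, s, log, k, inner)"
  shows "distinct (map fst log) \<and> set (map fst log) = G \<and>
         (\<forall>(e, j)\<in>set log. j = truss_number \<tau> e G)"
proof -
  have g: "gwf G" unfolding gwf_def using assms(1,2) by blast
  have iv: "inv \<tau> G (H, s, log, k, inner)" using inv_reach[OF g assms(4)] .
  have f: "H = {}" using assms(5) unfolding final_state_def by simp
  show ?thesis using iv f unfolding inv_def by simp
qed

end
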